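(* Let $a_1,a_2,a_3,a_4$ be nonzero integers. There is a constant $C$ (depending at most on $a_1,\dots,a_4$) such that for every $n$ and every Sidon set $X\subseteq\{1,\dots,n\}$, the number of $4$-tuples $(x_1,x_2,x_3,x_4)\in X^4$ with $a_1x_1+a_2x_2+a_3x_3+a_4x_4=0$ is at most $Cn$.
   Context: A set $X$ of integers is a Sidon set if it has no nontrivial solution to $x_1+x_2=x_3+x_4$ with $x_i\in X$, where a solution is trivial if $(x_1,x_2)=(x_3,x_4)$ or $(x_1,x_2)=(x_4,x_3)$. *)

theory Defs
  imports Complex_Main
begin

definition sidon :: "int set \<Rightarrow> bool" where
  "sidon X \<longleftrightarrow> (\<forall>x1\<in>X. \<forall>x2\<in>X. \<forall>x3\<in>X. \<forall>x4\<in>X.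
      x1 + x2 = x3 + x4 \<longrightarrow> ((x1, x2) = (x3, x4) \<or> (x1, x2) = (x4, x3)))"

end

theory Submission
  imports Defs
begin

lemma nat_amgm: "2 * (a::nat) * b \<le> a * a + b * b"
proof -
  have "int (2*a*b) \<le> int (a*a + b*b)"
  proof -
    have "0 \<le> (int a - int b)^2" by simp
    then show ?thesis by (simp add: power2_eq_square algebra_simps)
  qed
  then show ?thesis by linarith
qed

lemma cross_bound:
  fixes f :: "'a \<Rightarrow> int" and h :: "'b \<Rightarrow> int"
  assumes A: "finite A" and B: "finite B"
  shows "2 * card {(p,q). p\<in>A \<and> q\<in>B \<and> f p = h q}
     \<le> card {(p,p'). p\<in>A \<and> p'\<in>A \<and> f p = f p'} + card {(q,q'). q\<in>B \<and> q'\<in>B \<and> h q = h q'}"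
proof -
  define V where "V = f ` A \<union> h ` B"
  have fV: "finite V" using A B by (simp add: V_def)
  define FA where "FA c = {p\<in>A. f p = c}" for c
  define FB where "FB c = {q\<in>B. h q = c}" for c
  have fFA: "finite (FA c)" for c using A by (simp add: FA_def)
  have fFB: "finite (FB c)" for c using B by (simp add: FB_def)
  have e1: "{(p,q). p\<in>A \<and> q\<in>B \<and> f p = h q} = (\<Union>c\<in>V. FA c \<times> FB c)"
    by (auto simp: V_def FA_def FB_def)
  have e2: "{(p,p'). p\<in>A \<and> p'\<in>A \<and> f p = f p'} = (\<Union>c\<in>V. FA c \<times> FA c)"
    by (auto simp: V_def FA_def)
  have e3: "{(q,q'). q\<in>B \<and> q'\<in>B \<and> h q = h q'} = (\<Union>c\<in>V. FB c \<times> FB c)"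
    by (auto simp: V_def FB_def)
  have c1: "card (\<Union>c\<in>V. FA c \<times> FB c) = (\<Sum>c\<in>V. card (FA c) * card (FB c))"
    by (subst card_UN_disjoint) (auto simp: fV fFA fFB card_cartesian_product, auto simp: FA_def FB_def)
  have c2: "card (\<Union>c\<in>V. FA c \<times> FA c) = (\<Sum>c\<in>V. card (FA c) * card (FA c))"
    by (subst card_UN_disjoint) (auto simp: fV fFA card_cartesian_product, auto simp: FA_def)
  have c3: "card (\<Union>c\<in>V. FB c \<times> FB c) = (\<Sum>c\<in>V. card (FB c) * card (FB c))"
    by (subst card_UN_disjoint) (auto simp: fV fFB card_cartesian_product, auto simp: FB_def)
  have "2 * (\<Sum>c\<in>V. card (FA c) * card (FB c)) \<le> (\<Sum>c\<in>V. card (FA c) * card (FA c)) + (\<Sum>c\<in>V. card (FB c) * card (FB c))"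
    by (simp add: sum_distrib_left sum.distrib[symmetric] sum_mono nat_amgm mult.assoc[symmetric])
  then show ?thesis using e1 e2 e3 c1 c2 c3 by simp
qed

lemma energy_bound:
  fixes a b :: int
  assumes a: "a \<noteq> 0" and b: "b \<noteq> 0" and S: "sidon X" and fX: "finite X"
  shows "card {(p,p'). p\<in>X\<times>X \<and> p'\<in>X\<times>X \<and> a * fst p + b * snd p = a * fst p' + b * snd p'}
     \<le> 2 * (card X * card X)"
proof -
  let ?E = "{(p,p'). p\<in>X\<times>X \<and> p'\<in>X\<times>X \<and> a * fst p + b * snd p = a * fst p' + b * snd p'}"
  define g where "g = (\<lambda>((x1::int,x2::int),(y1::int,y2::int)).
      (if x1 = y1 then (x1,x2) else (x1,y1), x1 = y1))"
  have inj: "inj_on g ?E"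
  proof (rule inj_onI)
    fix u v assume u: "u \<in> ?E" and v: "v \<in> ?E" and guv: "g u = g v"
    obtain x1 x2 y1 y2 where uu: "u = ((x1,x2),(y1,y2))" by (metis prod.collapse)
    obtain x1' x2' y1' y2' where vv: "v = ((x1',x2'),(y1',y2'))" by (metis prod.collapse)
    show "u = v"
    proof (cases "x1 = y1")
      case True
      then have "x1' = y1'" using guv by (simp add: g_def uu vv split: if_splits)
      then show ?thesis using True u v guv b by (simp add: g_def uu vv)
    next
      case False
      then have ne: "x1' \<noteq> y1'" and e1: "x1 = x1'" and e2: "y1 = y1'"
        using guv by (simp_all add: g_def uu vv split: if_splits)
      have h1: "b * (x2 - y2) = a * (y1 - x1)" using u by (simp add: uu algebra_simps)
      have h2: "b * (x2' - y2') = a * (y1 - x1)" using v e1 e2 by (simp add: vv algebra_simps)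
      have d: "x2 - y2 = x2' - y2'" using h1 h2 b by (metis mult_cancel_left)
      have nz: "x2 \<noteq> y2" using h1 False a by auto
      have mem: "x2 \<in> X" "y2 \<in> X" "x2' \<in> X" "y2' \<in> X" using u v by (auto simp: uu vv)
      have "x2 + y2' = x2' + y2" using d by simp
      then have "(x2, y2') = (x2', y2) \<or> (x2, y2') = (y2, x2')"
        using S mem unfolding sidon_def by blast
      then have "x2 = x2' \<and> y2 = y2'" using nz by auto
      then show ?thesis using e1 e2 by (simp add: uu vv)
    qed
  qed
  have sub: "g ` ?E \<subseteq> (X \<times> X) \<times> UNIV" by (auto simp: g_def split: if_splits)
  have "card ?E = card (g ` ?E)" using inj by (simp add: card_image)
  also have "\<dots> \<le> card ((X \<times> X) \<times> (UNIV::bool set))"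
    by (rule card_mono) (use fX sub in auto)
  also have "\<dots> = 2 * (card X * card X)" by (simp add: card_cartesian_product)
  finally show ?thesis .
qed

lemma sidon_sq:
  assumes S: "sidon X" and sub: "X \<subseteq> {1..int n}"
  shows "card X * card X \<le> 3 * n"
proof -
  have fX: "finite X" using sub finite_subset by blast
  have cX: "card X \<le> n" using card_mono[OF _ sub] by simp
  let ?O = "{(x,y). x\<in>X \<and> y\<in>X \<and> x \<noteq> y}"
  have inj: "inj_on (\<lambda>(x,y). x - y) ?O"
  proof (rule inj_onI)
    fix u v assume u: "u \<in> ?O" and v: "v \<in> ?O" and e: "(\<lambda>(x,y). x - y) u = (\<lambda>(x,y). x - y) v"
    obtain x y x' y' where uu: "u = (x,y)" and vv: "v = (x',y')" by (metis prod.collapse)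
    have "x + y' = x' + y" using e by (simp add: uu vv)
    then have "(x, y') = (x', y) \<or> (x, y') = (y, x')" using S u v unfolding sidon_def uu vv by auto
    then show "u = v" using u by (auto simp: uu vv)
  qed
  have im: "(\<lambda>(x,y). x - y) ` ?O \<subseteq> {- int n..int n} - {0}"
  proof
    fix d assume "d \<in> (\<lambda>(x,y). x - y) ` ?O"
    then obtain x y where "x \<in> X" "y \<in> X" "x \<noteq> y" "d = x - y" by auto
    moreover have "1 \<le> x" "x \<le> int n" "1 \<le> y" "y \<le> int n"
      using sub calculation(1,2) by (auto simp: subset_iff)
    ultimately show "d \<in> {- int n..int n} - {0}" by simp
  qed
  have "card ?O = card ((\<lambda>(x,y). x - y) ` ?O)" using inj by (simp add: card_image)
  also have "\<dots> \<le> card ({- int n..int n} - {0})" by (rule card_mono[OF _ im]) simp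
  also have "\<dots> = 2 * n" by simp
  finally have cO: "card ?O \<le> 2 * n" .
  have XX: "X \<times> X = ?O \<union> (\<lambda>x. (x,x)) ` X" by auto
  have "card (X \<times> X) \<le> card ?O + card ((\<lambda>x. (x,x)) ` X)" unfolding XX by (rule card_Un_le)
  also have "\<dots> \<le> 2 * n + card X" using cO card_image_le[OF fX] by (meson add_mono)
  finally show ?thesis using cX by (simp add: card_cartesian_product)
qed

theorem lemma1p18:
  fixes a1 a2 a3 a4 :: int
  assumes "a1 \<noteq> 0" "a2 \<noteq> 0" "a3 \<noteq> 0" "a4 \<noteq> 0"
  shows "\<exists>C::real. \<forall>(n::nat) (X::int set). X \<subseteq> {1..int n} \<and> sidon X \<longrightarrow>
           real (card {(x1, x2, x3, x4). x1 \<in> X \<and> x2 \<in> X \<and> x3 \<in> X \<and> x4 \<in> X \<and>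
                         a1 * x1 + a2 * x2 + a3 * x3 + a4 * x4 = 0}) \<le> C * real n"
proof (intro exI[of _ 6] allI impI)
  fix n :: nat and X :: "int set"
  assume H: "X \<subseteq> {1..int n} \<and> sidon X"
  have fX: "finite X" using H finite_subset by blast
  let ?S = "{(x1, x2, x3, x4). x1 \<in> X \<and> x2 \<in> X \<and> x3 \<in> X \<and> x4 \<in> X \<and>
                         a1 * x1 + a2 * x2 + a3 * x3 + a4 * x4 = 0}"
  define f where "f = (\<lambda>p::int\<times>int. a1 * fst p + a2 * snd p)"
  define h where "h = (\<lambda>p::int\<times>int. (-a3) * fst p + (-a4) * snd p)"
  let ?P = "{(p,q). p\<in>X\<times>X \<and> q\<in>X\<times>X \<and> f p = h q}"
  have "?S = (\<lambda>((x1,x2),(x3,x4)). (x1,x2,x3,x4)) ` ?P"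
  proof (rule set_eqI)
    fix t show "t \<in> ?S \<longleftrightarrow> t \<in> (\<lambda>((x1,x2),(x3,x4)). (x1,x2,x3,x4)) ` ?P"
    proof
      assume "t \<in> ?S"
      then obtain x1 x2 x3 x4 where t: "t = (x1,x2,x3,x4)" and m: "x1 \<in> X" "x2 \<in> X" "x3 \<in> X" "x4 \<in> X"
        and eq: "a1 * x1 + a2 * x2 + a3 * x3 + a4 * x4 = 0" by auto
      have "((x1,x2),(x3,x4)) \<in> ?P" using m eq by (simp add: f_def h_def)
      then show "t \<in> (\<lambda>((x1,x2),(x3,x4)). (x1,x2,x3,x4)) ` ?P" unfolding t by force
    next
      assume "t \<in> (\<lambda>((x1,x2),(x3,x4)). (x1,x2,x3,x4)) ` ?P"
      then show "t \<in> ?S" by (auto simp: f_def h_def)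
    qed
  qed
  moreover have "inj_on (\<lambda>((x1::int,x2::int),(x3::int,x4::int)). (x1,x2,x3,x4)) ?P"
    by (auto simp: inj_on_def)
  ultimately have cS: "card ?S = card ?P" by (simp add: card_image)
  have fXX: "finite (X \<times> X)" using fX by simp
  have "2 * card ?P \<le> card {(p,p'). p\<in>X\<times>X \<and> p'\<in>X\<times>X \<and> f p = f p'} + card {(q,q'). q\<in>X\<times>X \<and> q'\<in>X\<times>X \<and> h q = h q'}"
    by (rule cross_bound[OF fXX fXX])
  also have "\<dots> \<le> 2 * (card X * card X) + 2 * (card X * card X)"
    using energy_bound[OF assms(1,2) _ fX, of ] energy_bound[of "-a3" "-a4" X] assms H fX
    unfolding f_def h_def by (intro add_mono) auto
  also have "\<dots> \<le> 12 * n" using sidon_sq[of X n] H by simp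
  finally have "card ?S \<le> 6 * n" using cS by simp
  then show "real (card ?S) \<le> 6 * real n" by simp
qed

end
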